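(* Let $f:V\to W$ be a smooth map between finite-dimensional real inner product spaces with $|f|_{[r]}<\infty$, and let $P$ be a monopolar $k$-chain in $V$. Then $|f_*P|^{\natural_r}\le|f|_{[r]}\,|P|^{\natural_r}$.
   Context: For a simple $k$-vector $\alpha=w_1\wedge\dots\wedge w_k$, $M(\alpha)=\sqrt{\det\langle w_i,w_j\rangle}$. A monopolar $k$-chain in $V$ is a finite formal sum $\sum_i(p_i;\alpha_i)$, $p_i\in V$, $\alpha_i\in\Lambda_k(V)$, linear in the second slot at each point. $T_u(p;\alpha)=(p+u;\alpha)$, $\Delta_u=T_u-\mathrm{id}$, $\Delta^j_U=\Delta_{u_1}\circ\dots\circ\Delta_{u_j}$ for $U=(u_1,\dots,u_j)$, $\|\Delta^j_U(p;\alpha)\|_j=|u_1|\cdots|u_j|M(\alpha)$. A $k$-form is a linear functional $\omega$ on monopolar $k$-chains; $\|\omega\|_0=\sup\{|\omega(p;\alpha)|:\alpha$ simple, $M(\alpha)=1\}$, $\|\omega\|_j=\sup\{|\omega(\Delta^j_U(p;\alpha))|:\|\Delta^j_U(p;\alpha)\|_j=1\}$, $|\omega|^{\natural_r}=\max_{0\le j\le r}\|\omega\|_j$, $\mathcal B_k^r$ = forms with finite $|\omega|^{\natural_r}$. For a chain $P$, $|P|^{\natural_r}=\sup_{0\ne\omega\in\mathcal B_k^r}\omega(P)/|\omega|^{\natural_r}$. Pushforward: $f_*(x;v_1\wedge\dots\wedge v_k)=(f(x);Df_xv_1\wedge\dots\wedge Df_xv_k)$, extended linearly. $\|f\|_{[j]}=\sup|f_*\Delta^j_U(x;\alpha)|^{\natural_j}/\|\Delta^j_U(x;\alpha)\|_j$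 over $x$, nonzero $U$, nonzero simple $\alpha$; $|f|_{[r]}=\max\{\|f\|_{[0]},\dots,\|f\|_{[r]}\}$. *)

theory Defs
  imports "HOL-Analysis.Analysis"
begin

fun iter_dd :: "'v::real_normed_vector list \<Rightarrow> ('v \<Rightarrow> 'w::real_normed_vector) \<Rightarrow> 'v \<Rightarrow> 'w" where
  "iter_dd [] g = g"
| "iter_dd (v # vs) g = (\<lambda>x. frechet_derivative (iter_dd vs g) (at x) v)"

definition smooth_map :: "('v::real_normed_vector \<Rightarrow> 'w::real_normed_vector) \<Rightarrow> bool" where
  "smooth_map g \<longleftrightarrow> (\<forall>vs. (\<forall>x. iter_dd vs g differentiable (at x)) \<and> continuous_on UNIV (iter_dd vs g))"

section \<open>Mass of a simple k-vector w_1 \<and> ... \<and> w_k, given by the list [w_1,...,w_k]\<close>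

definition det_list :: "nat \<Rightarrow> (nat \<Rightarrow> nat \<Rightarrow> real) \<Rightarrow> real" where
  "det_list n A = (\<Sum>p | p permutes {..<n}. of_int (sign p) * (\<Prod>i<n. A i (p i)))"

definition mass :: "'v::real_inner list \<Rightarrow> real" where
  "mass ws = sqrt (det_list (length ws) (\<lambda>i j. inner (ws ! i) (ws ! j)))"

text \<open>A monopolar chain is a finite formal sum of terms c (p; w_1 \<and> ... \<and> w_k); it is represented
  by a list of triples (c, p, [w_1,...,w_k]).  Every k-vector is a finite sum of simple ones,
  so every monopolar k-chain has such a representation.  Forms are linear, so all quantities
  below only depend on the chain, not on the chosen representation.\<close>

type_synonym 'v chain = "(real \<times> 'v \<times> 'v list) list"

definition kchain :: "nat \<Rightarrow> 'v chain \<Rightarrow> bool" where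
  "kchain k P \<longleftrightarrow> (\<forall>(c, p, ws) \<in> set P. length ws = k)"

definition simple_chain :: "'v \<Rightarrow> 'v list \<Rightarrow> 'v chain" where
  "simple_chain p ws = [(1, p, ws)]"

definition transl :: "'v::real_vector \<Rightarrow> 'v chain \<Rightarrow> 'v chain" where
  "transl u P = map (\<lambda>(c, p, ws). (c, p + u, ws)) P"

definition diff_op :: "'v::real_vector \<Rightarrow> 'v chain \<Rightarrow> 'v chain" where
  "diff_op u P = transl u P @ map (\<lambda>(c, p, ws). (- c, p, ws)) P"

fun diff_iter :: "'v::real_vector list \<Rightarrow> 'v chain \<Rightarrow> 'v chain" where
  "diff_iter [] P = P"
| "diff_iter (u # U) P = diff_op u (diff_iter U P)"

definition dnorm :: "'v::real_inner list \<Rightarrow> 'v list \<Rightarrow> real" where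
  "dnorm U ws = (\<Prod>u\<leftarrow>U. norm u) * mass ws"

text \<open>A linear functional on monopolar k-chains is the same as a choice, at every point p,
  of a linear functional on Lambda_k(V), i.e. of an alternating k-linear map on V.\<close>

definition kform :: "nat \<Rightarrow> ('v::real_vector \<Rightarrow> 'v list \<Rightarrow> real) \<Rightarrow> bool" where
  "kform k \<omega> \<longleftrightarrow>
     (\<forall>p ws. length ws \<noteq> k \<longrightarrow> \<omega> p ws = 0) \<and>
     (\<forall>p ws i. length ws = k \<longrightarrow> i < k \<longrightarrow> linear (\<lambda>v. \<omega> p (ws[i := v]))) \<and>
     (\<forall>p ws i j. length ws = k \<longrightarrow> i < k \<longrightarrow> j < k \<longrightarrow> i \<noteq> j \<longrightarrow> ws ! i = ws ! j \<longrightarrow> \<omega> p ws = 0)"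

definition eval_form :: "('v \<Rightarrow> 'v list \<Rightarrow> real) \<Rightarrow> 'v chain \<Rightarrow> real" where
  "eval_form \<omega> P = (\<Sum>(c, p, ws)\<leftarrow>P. c * \<omega> p ws)"

definition form_norm_j :: "nat \<Rightarrow> nat \<Rightarrow> ('v::real_inner \<Rightarrow> 'v list \<Rightarrow> real) \<Rightarrow> ereal" where
  "form_norm_j k j \<omega> = Sup (insert 0 ((\<lambda>(p, U, ws).
       ereal \<bar>eval_form \<omega> (diff_iter U (simple_chain p ws))\<bar>) ` {(p, U, ws). length U = j \<and> length ws = k \<and> dnorm U ws = 1}))"

text \<open>All sups are of nonnegative quantities (the chain-norm set is symmetric under
  omega to -omega); 0 is inserted only so that an empty sup is 0.  For j = 0 this is exactly the comass sup{|omega(p;alpha)| : alpha simple, M(alpha)=1}.\<close>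

definition form_norm :: "nat \<Rightarrow> nat \<Rightarrow> ('v::real_inner \<Rightarrow> 'v list \<Rightarrow> real) \<Rightarrow> ereal" where
  "form_norm k r \<omega> = Max ((\<lambda>j. form_norm_j k j \<omega>) ` {0..r})"

definition chain_norm :: "nat \<Rightarrow> nat \<Rightarrow> 'v::real_inner chain \<Rightarrow> ereal" where
  "chain_norm k r P = Sup (insert 0 ((\<lambda>\<omega>. ereal (eval_form \<omega> P / real_of_ereal (form_norm k r \<omega>))) `
       {\<omega>. kform k \<omega> \<and> \<omega> \<noteq> (\<lambda>p ws. 0) \<and> form_norm k r \<omega> < \<infinity>}))"

definition push :: "('v::real_normed_vector \<Rightarrow> 'w::real_normed_vector) \<Rightarrow> 'v chain \<Rightarrow> 'w chain" where
  "push f P = map (\<lambda>(c, x, ws). (c, f x, map (frechet_derivative f (at x)) ws)) P"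

definition map_norm_j :: "nat \<Rightarrow> nat \<Rightarrow> ('v::real_inner \<Rightarrow> 'w::real_inner) \<Rightarrow> ereal" where
  "map_norm_j k j f = Sup (insert 0 ((\<lambda>(x, U, ws).
       chain_norm k j (push f (diff_iter U (simple_chain x ws))) / ereal (dnorm U ws)) ` {(x, U, ws). length U = j \<and> (\<forall>u \<in> set U. u \<noteq> 0) \<and>
         length ws = k \<and> mass ws \<noteq> 0}))"

definition map_norm :: "nat \<Rightarrow> nat \<Rightarrow> ('v::real_inner \<Rightarrow> 'w::real_inner) \<Rightarrow> ereal" where
  "map_norm k r f = Max ((\<lambda>j. map_norm_j k j f) ` {0..r})"

end

theory Submission
  imports Defs
begin

lemma det_list_id:
  assumes "\<forall>i<n. \<forall>j<n. A i j = (if i = j then 1 else 0)"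
  shows "det_list n A = 1"
proof -
  have fin: "finite {p. p permutes {..<n}}" by (simp add: finite_permutations)
  have "det_list n A = (\<Sum>p\<in>{p. p permutes {..<n}}. if p = id then 1 else 0)"
    unfolding det_list_def
  proof (rule sum.cong[OF refl])
    fix p assume "p \<in> {p. p permutes {..<n}}"
    then have pp: "p permutes {..<n}" by simp
    show "of_int (sign p) * (\<Prod>i<n. A i (p i)) = (if p = id then 1 else 0)"
    proof (cases "p = id")
      case True then show ?thesis using assms by (simp add: sign_id)
    next
      case False
      then obtain i where i: "p i \<noteq> i" by (meson eq_id_iff)
      with pp have "i < n" "p i < n"
        by (auto simp: permutes_def permutes_in_image[OF pp])
      then have "A i (p i) = 0" using assms i by auto
      then have "(\<Prod>i<n. A i (p i)) = 0" using \<open>i < n\<close>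
        by (metis finite_lessThan lessThan_iff prod_zero)
      then show ?thesis using False by simp
    qed
  qed
  also have "\<dots> = 1" using fin by (simp add: permutes_id)
  finally show ?thesis .
qed

lemma mass_orthonormal:
  fixes ws :: "'v::real_inner list"
  assumes "\<forall>i<length ws. \<forall>j<length ws. ws!i \<bullet> ws!j = (if i = j then 1 else 0)"
  shows "mass ws = 1"
  unfolding mass_def using det_list_id[of "length ws"] assms by simp

lemma alt_zero:
  fixes g :: "'v::euclidean_space list \<Rightarrow> real"
  assumes lin: "\<And>ws i. length ws = k \<Longrightarrow> i < k \<Longrightarrow> linear (\<lambda>v. g (ws[i := v]))"
    and alt: "\<And>ws i j. length ws = k \<Longrightarrow> i < k \<Longrightarrow> j < k \<Longrightarrow> i \<noteq> j \<Longrightarrow> ws!i = ws!j \<Longrightarrow> g ws = 0"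
    and m1: "\<And>ws. length ws = k \<Longrightarrow> mass ws = 1 \<Longrightarrow> g ws = 0"
    and len: "length ws = k"
  shows "g ws = 0"
proof -
  have claim: "\<forall>ws. length ws = k \<longrightarrow> (\<forall>i<m. \<forall>j<k. i \<noteq> j \<longrightarrow> ws!i \<bullet> ws!j = 0)
      \<longrightarrow> (\<forall>i<m. norm (ws!i) = 1) \<longrightarrow> g ws = 0" if "m \<le> k" for m
    using that
  proof (induction m rule: inc_induct)
    case base
    show ?case
    proof (intro allI impI)
      fix ws :: "'v list"
      assume l: "length ws = k" and o: "\<forall>i<k. \<forall>j<k. i \<noteq> j \<longrightarrow> ws!i \<bullet> ws!j = 0"
        and nn: "\<forall>i<k. norm (ws!i) = 1"
      have "\<forall>i<length ws. \<forall>j<length ws. ws!i \<bullet> ws!j = (if i = j then 1 else 0)"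
      proof (intro allI impI)
        fix i j assume "i < length ws" "j < length ws"
        then show "ws!i \<bullet> ws!j = (if i = j then 1 else 0)"
          using o nn l by (auto simp: dot_square_norm)
      qed
      then show "g ws = 0" using m1 l mass_orthonormal by blast
    qed
  next
    case (step n)
    show ?case
    proof (intro allI impI)
      fix ws :: "'v list"
      assume l: "length ws = k" and o: "\<forall>i<n. \<forall>j<k. i \<noteq> j \<longrightarrow> ws!i \<bullet> ws!j = 0"
        and nn: "\<forall>i<n. norm (ws!i) = 1"
      define S where "S = {ws!j | j. j < k \<and> j \<noteq> n}"
      obtain y z where y: "y \<in> span S" and z: "\<And>w. w \<in> span S \<Longrightarrow> orthogonal z w"
        and yz: "ws!n = y + z"
        using orthogonal_subspace_decomp_exists by blast
      have ln: "linear (\<lambda>v. g (ws[n := v]))" using lin l step.hyps by simp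
      have "g ws = g (ws[n := ws!n])" by simp
      also have "\<dots> = g (ws[n := y]) + g (ws[n := z])"
        unfolding yz using linear_add[OF ln] by simp
      finally have split: "g ws = g (ws[n := y]) + g (ws[n := z])" .
      have "span S \<subseteq> {v. g (ws[n := v]) = 0}"
      proof (rule span_minimal)
        show "S \<subseteq> {v. g (ws[n := v]) = 0}"
        proof
          fix v assume "v \<in> S"
          then obtain j where j: "j < k" "j \<noteq> n" "v = ws!j" unfolding S_def by blast
          have "g (ws[n := v]) = 0"
            by (rule alt[of _ n j]) (use l j step.hyps in auto)
          then show "v \<in> {v. g (ws[n := v]) = 0}" by simp
        qed
        show "subspace {v. g (ws[n := v]) = 0}"
          using ln by (rule linear_subspace_kernel)
      qed
      with y have gy: "g (ws[n := y]) = 0" by blast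
      have gz: "g (ws[n := z]) = 0"
      proof (cases "z = 0")
        case True
        then show ?thesis using linear_0[OF ln] by simp
      next
        case False
        define e where "e = z /\<^sub>R norm z"
        have ze: "z = norm z *\<^sub>R e" using False unfolding e_def by simp
        have ne: "norm e = 1" using False unfolding e_def by simp
        have orth: "\<And>j. j < k \<Longrightarrow> j \<noteq> n \<Longrightarrow> ws!j \<bullet> e = 0"
        proof -
          fix j assume "j < k" "j \<noteq> n"
          then have "ws!j \<in> span S" unfolding S_def by (blast intro: span_base)
          then have "z \<bullet> ws!j = 0" using z unfolding orthogonal_def by blast
          then show "ws!j \<bullet> e = 0" unfolding e_def by (simp add: inner_commute)
        qed
        have "g (ws[n := e]) = 0"
        proof -
          have A: "\<forall>i<Suc n. \<forall>j<k. i \<noteq> j \<longrightarrow> ws[n := e]!i \<bullet> ws[n := e]!j = 0"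
          proof (intro allI impI)
            fix i j assume i: "i < Suc n" and j: "j < k" and ij: "i \<noteq> j"
            show "ws[n := e]!i \<bullet> ws[n := e]!j = 0"
            proof (cases "i = n")
              case True
              then show ?thesis using ij j l step.hyps orth[of j] by (simp add: inner_commute)
            next
              case False
              then have "i < n" using i by simp
              then show ?thesis using ij j l step.hyps orth[of i] o
                by (cases "j = n") auto
            qed
          qed
          have B: "\<forall>i<Suc n. norm (ws[n := e]!i) = 1"
            using nn ne l step.hyps by (auto simp: less_Suc_eq nth_list_update)
          show ?thesis using step.IH A B l by simp
        qed
        then show ?thesis using ze linear_scale[OF ln, of "norm z" e] by simp
      qed
      show "g ws = 0" using split gy gz by simp
    qed
  qed
  show ?thesis using claim[of 0] len by simp
qed


lemma ereal_prod_nonneg: "0 \<le> (a::ereal) \<Longrightarrow> 0 \<le> b \<Longrightarrow> 0 \<le> a * b"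
  using ereal_mult_right_mono[of 0 a b] by simp

lemma fnj_ge:
  assumes "length U = j" "length ws = k" "dnorm U ws = 1"
  shows "ereal \<bar>eval_form \<omega> (diff_iter U (simple_chain p ws))\<bar> \<le> form_norm_j k j \<omega>"
  unfolding form_norm_j_def
  by (rule Sup_upper) (rule insertI2, rule image_eqI[of _ _ "(p, U, ws)"], use assms in auto)

lemma fnj_nonneg: "0 \<le> form_norm_j k j \<omega>"
  unfolding form_norm_j_def by (rule Sup_upper) simp

lemma fn_ge_j: "j \<le> r \<Longrightarrow> form_norm_j k j \<omega> \<le> form_norm k r \<omega>"
  unfolding form_norm_def by (rule Max_ge) auto

lemma fn_nonneg: "0 \<le> form_norm k r \<omega>"
  using fnj_nonneg fn_ge_j[of 0 r] order_trans by blast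

lemma fn_mono: "j \<le> r \<Longrightarrow> form_norm k j \<omega> \<le> form_norm k r \<omega>"
  unfolding form_norm_def by (rule Max_mono) auto

lemma cn_nonneg: "0 \<le> chain_norm k r P"
  unfolding chain_norm_def by (rule Sup_upper) simp

lemma mnj_nonneg: "0 \<le> map_norm_j k j f"
  unfolding map_norm_j_def by (rule Sup_upper) simp

lemma mn_ge_j: "j \<le> r \<Longrightarrow> map_norm_j k j f \<le> map_norm k r f"
  unfolding map_norm_def by (rule Max_ge) auto

lemma mn_nonneg: "0 \<le> map_norm k r f"
  using mnj_nonneg mn_ge_j[of 0 r] order_trans by blast

lemma eval_simple: "eval_form \<omega> (simple_chain p ws) = \<omega> p ws"
  by (simp add: eval_form_def simple_chain_def)

lemma comass_zero:
  fixes \<omega> :: "'v::euclidean_space \<Rightarrow> 'v list \<Rightarrow> real"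
  assumes kf: "kform k \<omega>" and z: "form_norm k j \<omega> = 0"
  shows "\<omega> = (\<lambda>p ws. 0)"
proof (intro ext)
  fix p and ws :: "'v list"
  have z0: "form_norm_j k 0 \<omega> \<le> 0" using fn_ge_j[of 0 j k \<omega>] z by simp
  show "\<omega> p ws = 0"
  proof (cases "length ws = k")
    case False then show ?thesis using kf unfolding kform_def by blast
  next
    case True
    show ?thesis
    proof (rule alt_zero[where g = "\<omega> p" and k = k])
      show "\<And>ws i. length ws = k \<Longrightarrow> i < k \<Longrightarrow> linear (\<lambda>v. \<omega> p (ws[i := v]))"
        using kf unfolding kform_def by blast
      show "\<And>ws i j. length ws = k \<Longrightarrow> i < k \<Longrightarrow> j < k \<Longrightarrow> i \<noteq> j \<Longrightarrow> ws!i = ws!j \<Longrightarrow> \<omega> p ws = 0"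
        using kf unfolding kform_def by blast
      show "\<And>ws. length ws = k \<Longrightarrow> mass ws = 1 \<Longrightarrow> \<omega> p ws = 0"
      proof -
        fix ws :: "'v list" assume "length ws = k" "mass ws = 1"
        then have "ereal \<bar>\<omega> p ws\<bar> \<le> form_norm_j k 0 \<omega>"
          using fnj_ge[of "[]" 0 ws k \<omega> p] by (simp add: eval_simple dnorm_def)
        then have "ereal \<bar>\<omega> p ws\<bar> \<le> 0" using z0 by (rule order_trans)
        then show "\<omega> p ws = 0" by simp
      qed
      show "length ws = k" by fact
    qed
  qed
qed

lemma eval_neg: "eval_form (\<lambda>p ws. - \<omega> p ws) Q = - eval_form \<omega> Q"
  by (induction Q) (auto simp: eval_form_def)

lemma eval_zero: "eval_form (\<lambda>p ws. 0) Q = 0"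
  by (induction Q) (auto simp: eval_form_def)

lemma fnj_neg: "form_norm_j k j (\<lambda>p ws. - \<omega> p ws) = form_norm_j k j \<omega>"
  unfolding form_norm_j_def eval_neg by simp

lemma fn_neg: "form_norm k r (\<lambda>p ws. - \<omega> p ws) = form_norm k r \<omega>"
  unfolding form_norm_def fnj_neg ..

lemma kform_neg: "kform k \<omega> \<Longrightarrow> kform k (\<lambda>p ws. - \<omega> p ws)"
  unfolding kform_def by (auto intro: linear_compose_neg)

lemma chain_ge:
  assumes "kform k \<omega>" "\<omega> \<noteq> (\<lambda>p ws. 0)" "form_norm k r \<omega> < \<infinity>"
  shows "ereal (eval_form \<omega> P / real_of_ereal (form_norm k r \<omega>)) \<le> chain_norm k r P"
  unfolding chain_norm_def
  by (rule Sup_upper) (rule insertI2, rule image_eqI[of _ _ \<omega>], use assms in auto)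

lemma key_ineq:
  fixes \<omega> :: "'v::euclidean_space \<Rightarrow> 'v list \<Rightarrow> real"
  assumes kf: "kform k \<omega>" and fin: "form_norm k r \<omega> < \<infinity>"
  shows "ereal \<bar>eval_form \<omega> Q\<bar> \<le> chain_norm k r Q * form_norm k r \<omega>"
proof (cases "\<omega> = (\<lambda>p ws. 0)")
  case True
  then show ?thesis using ereal_prod_nonneg[OF cn_nonneg[of k r Q] fn_nonneg[of k r \<omega>]] by (simp add: eval_zero zero_ereal_def)
next
  case False
  have ne0: "form_norm k r \<omega> \<noteq> 0" using comass_zero[OF kf] False by blast
  obtain n where n: "form_norm k r \<omega> = ereal n" using fin fn_nonneg[of k r \<omega>]
    by (cases "form_norm k r \<omega>") auto
  have npos: "n > 0" using n ne0 fn_nonneg[of k r \<omega>] by auto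
  have neg_ne: "(\<lambda>p ws. - \<omega> p ws) \<noteq> (\<lambda>p ws. 0)"
  proof
    assume "(\<lambda>p ws. - \<omega> p ws) = (\<lambda>p ws. 0)"
    then have "\<omega> = (\<lambda>p ws. 0)" by (metis (no_types) minus_equation_iff neg_0_equal_iff_equal)
    then show False using False by simp
  qed
  have a1: "ereal (eval_form \<omega> Q / n) \<le> chain_norm k r Q"
    using chain_ge[OF kf False fin, where P=Q] n by simp
  have a2: "ereal (- eval_form \<omega> Q / n) \<le> chain_norm k r Q"
    using chain_ge[OF kform_neg[OF kf] neg_ne, where P=Q and r=r] fin n by (simp add: fn_neg eval_neg)
  have "ereal (\<bar>eval_form \<omega> Q\<bar> / n) \<le> chain_norm k r Q"
    using a1 a2 by (cases "eval_form \<omega> Q \<ge> 0") auto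
  then have "ereal (\<bar>eval_form \<omega> Q\<bar> / n) * ereal n \<le> chain_norm k r Q * ereal n"
    using npos by (intro ereal_mult_right_mono) auto
  then show ?thesis using npos n by simp
qed

definition pb :: "('v::real_normed_vector \<Rightarrow> 'w::real_normed_vector) \<Rightarrow> ('w \<Rightarrow> 'w list \<Rightarrow> real) \<Rightarrow> 'v \<Rightarrow> 'v list \<Rightarrow> real" where
  "pb f \<omega> = (\<lambda>p ws. \<omega> (f p) (map (frechet_derivative f (at p)) ws))"

lemma eval_push: "eval_form \<omega> (push f Q) = eval_form (pb f \<omega>) Q"
  by (induction Q) (auto simp: eval_form_def push_def pb_def)

lemma kform_pb:
  fixes f :: "'v::real_normed_vector \<Rightarrow> 'w::real_normed_vector" and \<omega> :: "'w \<Rightarrow> 'w list \<Rightarrow> real"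
  assumes kf: "kform k \<omega>" and d: "\<And>x. f differentiable (at x)"
  shows "kform k (pb f \<omega>)"
  unfolding kform_def
proof (intro conjI allI impI)
  fix p and ws :: "'v list"
  assume "length ws \<noteq> k" then show "pb f \<omega> p ws = 0"
    using kf unfolding kform_def pb_def by simp
next
  fix p and ws :: "'v list" and i
  assume "length ws = k" "i < k"
  then have l1: "linear (\<lambda>u. \<omega> (f p) ((map (frechet_derivative f (at p)) ws)[i := u]))"
    using kf unfolding kform_def by simp
  have "linear ((\<lambda>u. \<omega> (f p) ((map (frechet_derivative f (at p)) ws)[i := u])) \<circ> frechet_derivative f (at p))"
    by (rule linear_compose[OF linear_frechet_derivative[OF d] l1])
  then show "linear (\<lambda>v. pb f \<omega> p (ws[i := v]))"
    by (simp add: pb_def o_def map_update)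
next
  fix p and ws :: "'v list" and i j
  assume "length ws = k" "i < k" "j < k" "i \<noteq> j" "ws ! i = ws ! j"
  then show "pb f \<omega> p ws = 0" using kf unfolding kform_def pb_def by auto
qed


lemma dnorm1:
  assumes "dnorm U ws = 1"
  shows "\<forall>u\<in>set U. u \<noteq> 0" "mass ws \<noteq> 0"
proof -
  show "\<forall>u\<in>set U. u \<noteq> 0"
  proof
    fix u assume u: "u \<in> set U"
    show "u \<noteq> 0"
    proof
      assume "u = 0"
      then have "0 \<in> set (map norm U)" using u by force
      then have "prod_list (map norm U) = 0" by (simp add: prod_list_zero_iff)
      then show False using assms by (simp add: dnorm_def)
    qed
  qed
  show "mass ws \<noteq> 0" using assms by (auto simp: dnorm_def)
qed

lemma pb_norm_bound:
  fixes f :: "'v::euclidean_space \<Rightarrow> 'w::euclidean_space" and \<omega> :: "'w \<Rightarrow> 'w list \<Rightarrow> real"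
  assumes kf: "kform k \<omega>" and fin: "form_norm k r \<omega> < \<infinity>"
  shows "form_norm k r (pb f \<omega>) \<le> map_norm k r f * form_norm k r \<omega>"
proof -
  have nn: "0 \<le> map_norm k r f * form_norm k r \<omega>"
    by (rule ereal_prod_nonneg[OF mn_nonneg fn_nonneg])
  have J: "form_norm_j k j (pb f \<omega>) \<le> map_norm k r f * form_norm k r \<omega>" if jr: "j \<le> r" for j
    unfolding form_norm_j_def
  proof (rule Sup_least)
    fix x assume "x \<in> insert 0 ((\<lambda>(p, U, ws). ereal \<bar>eval_form (pb f \<omega>) (diff_iter U (simple_chain p ws))\<bar>) `
        {(p, U, ws). length U = j \<and> length ws = k \<and> dnorm U ws = 1})"
    then consider "x = 0" | p U ws where "length U = j" "length ws = k" "dnorm U ws = 1"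
      "x = ereal \<bar>eval_form (pb f \<omega>) (diff_iter U (simple_chain p ws))\<bar>" by auto
    then show "x \<le> map_norm k r f * form_norm k r \<omega>"
    proof cases
      case 1 then show ?thesis using nn by simp
    next
      case 2
      define D where "D = diff_iter U (simple_chain p ws)"
      have finj: "form_norm k j \<omega> < \<infinity>" using order_le_less_trans[OF fn_mono[OF jr, of k \<omega>] fin] .
      have a: "ereal \<bar>eval_form \<omega> (push f D)\<bar> \<le> chain_norm k j (push f D) * form_norm k j \<omega>"
        by (rule key_ineq[OF kf finj])
      have "chain_norm k j (push f D) = chain_norm k j (push f D) / ereal (dnorm U ws)"
        using 2 by (simp add: one_ereal_def[symmetric])
      also have "\<dots> \<le> map_norm_j k j f"
        unfolding map_norm_j_def D_def
        by (rule Sup_upper) (rule insertI2, rule image_eqI[of _ _ "(p, U, ws)"], use 2 dnorm1[of U ws] in auto)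
      also have "\<dots> \<le> map_norm k r f" by (rule mn_ge_j[OF jr])
      finally have b: "chain_norm k j (push f D) \<le> map_norm k r f" .
      have "chain_norm k j (push f D) * form_norm k j \<omega> \<le> map_norm k r f * form_norm k r \<omega>"
        by (rule ereal_mult_mono[OF mn_nonneg fn_nonneg b fn_mono[OF jr]])
      with a show ?thesis using 2 by (simp add: D_def eval_push)
    qed
  qed
  show ?thesis
    unfolding form_norm_def[of k r "pb f \<omega>"]
    using J by (subst Max_le_iff) auto
qed

theorem mainTheorem6:
  fixes f :: "'v::euclidean_space \<Rightarrow> 'w::euclidean_space"
    and P :: "'v chain" and k r :: nat
  assumes "smooth_map f"
    and "map_norm k r f < \<infinity>"
    and "kchain k P"
  shows "chain_norm k r (push f P) \<le> map_norm k r f * chain_norm k r P"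
proof -
  have d: "\<And>x. f differentiable (at x)"
    using assms(1) unfolding smooth_map_def by (metis iter_dd.simps(1))
  obtain m where m: "map_norm k r f = ereal m" "m \<ge> 0"
    using assms(2) mn_nonneg[of k r f] by (cases "map_norm k r f") auto
  have nn: "0 \<le> map_norm k r f * chain_norm k r P"
    by (rule ereal_prod_nonneg[OF mn_nonneg cn_nonneg])
  show ?thesis
    unfolding chain_norm_def[of k r "push f P"]
  proof (rule Sup_least)
    fix x assume "x \<in> insert 0 ((\<lambda>\<omega>. ereal (eval_form \<omega> (push f P) / real_of_ereal (form_norm k r \<omega>))) `
       {\<omega>. kform k \<omega> \<and> \<omega> \<noteq> (\<lambda>p ws. 0) \<and> form_norm k r \<omega> < \<infinity>})"
    then consider "x = 0" | \<omega> where "kform k \<omega>" "form_norm k r \<omega> < \<infinity>"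
      "x = ereal (eval_form \<omega> (push f P) / real_of_ereal (form_norm k r \<omega>))" by auto
    then show "x \<le> map_norm k r f * chain_norm k r P"
    proof cases
      case 1 then show ?thesis using nn by simp
    next
      case 2
      obtain n where n: "form_norm k r \<omega> = ereal n" "n \<ge> 0"
        using 2 fn_nonneg[of k r \<omega>] by (cases "form_norm k r \<omega>") auto
      show ?thesis
      proof (cases "n = 0")
        case True then show ?thesis using 2 n nn by (simp add: zero_ereal_def)
      next
        case False
        then have npos: "n > 0" using n by simp
        have kf': "kform k (pb f \<omega>)" by (rule kform_pb[OF 2(1) d])
        have bnd: "form_norm k r (pb f \<omega>) \<le> map_norm k r f * ereal n"
          using pb_norm_bound[OF 2(1) 2(2), of f] n by simp
        have "map_norm k r f * ereal n < \<infinity>" using m by simp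
        then have fin': "form_norm k r (pb f \<omega>) < \<infinity>"
          using order_le_less_trans[OF bnd] by blast
        have "ereal (eval_form (pb f \<omega>) P) \<le> ereal \<bar>eval_form (pb f \<omega>) P\<bar>" by simp
        also have "\<dots> \<le> chain_norm k r P * form_norm k r (pb f \<omega>)"
          by (rule key_ineq[OF kf' fin'])
        also have "\<dots> \<le> chain_norm k r P * (map_norm k r f * ereal n)"
          by (rule ereal_mult_left_mono[OF bnd cn_nonneg])
        finally have e: "ereal (eval_form \<omega> (push f P)) \<le> (map_norm k r f * chain_norm k r P) * ereal n"
          by (simp add: eval_push mult.commute mult.left_commute)
        show ?thesis
        proof (cases "map_norm k r f * chain_norm k r P")
          case (real t)
          then have "eval_form \<omega> (push f P) \<le> t * n" using e by simp
          then have "eval_form \<omega> (push f P) / n \<le> t" using npos by (simp add: pos_divide_le_eq)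
          then show ?thesis using 2 n real by simp
        next
          case PInf then show ?thesis unfolding PInf by simp
        next
          case MInf then show ?thesis using nn unfolding MInf by simp
        qed
      qed
    qed
  qed
qed

end
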